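(* Let $T$ be an unrooted phylogenetic tree with leaf set $[n]$, $n\ge 2$, and non-negative edge lengths $l(e)$. Define $\varphi_{Pa}(i)=\sum_e \mu(i,e)\,l(e)$, the sum running over all edges of $T$. Then for every leaf $i$, $$\varphi_{Pa}(i)=\frac12\sum_{j\in[n],\,j\ne i}\lambda_{ij}\,d(i,j),$$ where $\lambda_{ij}=\prod_{v\in I(T;i,j)}\frac1{d(v)-1}$ and $d(i,j)$ is the sum of the edge lengths on the path between leaves $i$ and $j$. Moreover, $\sum_{i\in[n]}\varphi_{Pa}(i)=\sum_e l(e)$.
   Context: An unrooted phylogenetic tree on $[n]$ is an unrooted tree with leaf set $[n]$ whose non-leaf vertices are unlabelled and have degree at least 3. $d(v)$ denotes the degree of vertex $v$. For a leaf $i$ and an edge $e$, $I(T;i,e)$ is the set of interior vertices on the path from $i$ to $e$, including the endpoint of $e$ reached first from $i$ (if interior) but not the other endpoint. Then $\mu(i,e)=\frac12\prod_{v\in I(T;i,e)}\frac1{d(v)-1}$, with the empty product equal to 1. For leaves $i\ne j$, $I(T;i,j)$ is the set of interior vertices on the path from $i$ to $j$. *)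

theory Defs
  imports Complex_Main
begin

definition deg :: "'a set set \<Rightarrow> 'a \<Rightarrow> nat" where
  "deg E v = card {e \<in> E. v \<in> e}"

definition is_path :: "'a set set \<Rightarrow> 'a list \<Rightarrow> bool" where
  "is_path E p \<longleftrightarrow> p \<noteq> [] \<and> distinct p \<and>
     (\<forall>k. Suc k < length p \<longrightarrow> {p ! k, p ! Suc k} \<in> E)"

definition is_cycle :: "'a set set \<Rightarrow> 'a list \<Rightarrow> bool" where
  "is_cycle E c \<longleftrightarrow> length c \<ge> 3 \<and> is_path E c \<and> {last c, hd c} \<in> E"

definition is_tree :: "'a set \<Rightarrow> 'a set set \<Rightarrow> bool" where
  "is_tree V E \<longleftrightarrow> finite V \<and> V \<noteq> {} \<and>
     (\<forall>e\<in>E. card e = 2 \<and> e \<subseteq> V) \<and>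
     (\<forall>u\<in>V. \<forall>v\<in>V. \<exists>p. is_path E p \<and> hd p = u \<and> last p = v) \<and>
     \<not> (\<exists>c. is_cycle E c)"

text \<open>Unrooted phylogenetic tree on [n] = {1..n}: a tree whose leaves (degree-1 vertices)
  are exactly 1..n, all other vertices having degree at least 3. Interior vertices are
  unlabelled; they are represented by arbitrary natural numbers outside {1..n}.\<close>
definition phylo_tree :: "nat \<Rightarrow> nat set \<Rightarrow> nat set set \<Rightarrow> bool" where
  "phylo_tree n V E \<longleftrightarrow> is_tree V E \<and> {1..n} \<subseteq> V \<and>
     (\<forall>v\<in>{1..n}. deg E v = 1) \<and> (\<forall>v\<in>V - {1..n}. deg E v \<ge> 3)"

text \<open>The (unique, in a tree) path from u to v.\<close>
definition tpath :: "'a set set \<Rightarrow> 'a \<Rightarrow> 'a \<Rightarrow> 'a list" where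
  "tpath E u v = (THE p. is_path E p \<and> hd p = u \<and> last p = v)"

definition path_edges :: "'a list \<Rightarrow> 'a set set" where
  "path_edges p = {{p ! k, p ! Suc k} | k. Suc k < length p}"

definition tdist :: "'a set set \<Rightarrow> ('a set \<Rightarrow> real) \<Rightarrow> 'a \<Rightarrow> 'a \<Rightarrow> real" where
  "tdist E l u v = (\<Sum>e\<in>path_edges (tpath E u v). l e)"

definition I_leaves :: "nat \<Rightarrow> nat set \<Rightarrow> nat set set \<Rightarrow> nat \<Rightarrow> nat \<Rightarrow> nat set" where
  "I_leaves n V E i j = {v \<in> set (tpath E i j). v \<in> V - {1..n}}"

text \<open>Endpoint of e reached first from i: the endpoint a such that the other endpoint
  does not lie on the path from i to a.\<close>
definition near_end :: "'a set set \<Rightarrow> 'a \<Rightarrow> 'a set \<Rightarrow> 'a" where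
  "near_end E i e = (THE a. a \<in> e \<and> (\<forall>b\<in>e. b \<noteq> a \<longrightarrow> b \<notin> set (tpath E i a)))"

definition I_edge :: "nat \<Rightarrow> nat set \<Rightarrow> nat set set \<Rightarrow> nat \<Rightarrow> nat set \<Rightarrow> nat set" where
  "I_edge n V E i e = {v \<in> set (tpath E i (near_end E i e)). v \<in> V - {1..n}}"

definition mu :: "nat \<Rightarrow> nat set \<Rightarrow> nat set set \<Rightarrow> nat \<Rightarrow> nat set \<Rightarrow> real" where
  "mu n V E i e = 1/2 * (\<Prod>v\<in>I_edge n V E i e. 1 / (real (deg E v) - 1))"

definition lambda :: "nat \<Rightarrow> nat set \<Rightarrow> nat set set \<Rightarrow> nat \<Rightarrow> nat \<Rightarrow> real" where
  "lambda n V E i j = (\<Prod>v\<in>I_leaves n V E i j. 1 / (real (deg E v) - 1))"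

definition phi_Pa :: "nat \<Rightarrow> nat set \<Rightarrow> nat set set \<Rightarrow> (nat set \<Rightarrow> real) \<Rightarrow> nat \<Rightarrow> real" where
  "phi_Pa n V E l i = (\<Sum>e\<in>E. mu n V E i e * l e)"

end

theory Submission imports Defs begin

lemma is_path_alt: "is_path E p \<longleftrightarrow> p \<noteq> [] \<and> distinct p \<and> successively (\<lambda>x y. {x,y} \<in> E) p"
  unfolding is_path_def successively_conv_nth by blast

lemma is_path_rev: "is_path E p \<Longrightarrow> is_path E (rev p)"
  unfolding is_path_alt by (auto simp: insert_commute)

lemma is_path_append: "xs \<noteq> [] \<Longrightarrow> ys \<noteq> [] \<Longrightarrow>
  is_path E (xs @ ys) \<longleftrightarrow> is_path E xs \<and> is_path E ys \<and> set xs \<inter> set ys = {} \<and> {last xs, hd ys} \<in> E"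
  unfolding is_path_alt by (auto simp: successively_append_iff)

lemma is_path_Cons: "ys \<noteq> [] \<Longrightarrow>
  is_path E (x # ys) \<longleftrightarrow> is_path E ys \<and> x \<notin> set ys \<and> {x, hd ys} \<in> E"
  using is_path_append[of "[x]" ys E] by (auto simp: is_path_alt)

lemma is_path_single[simp]: "is_path E [x]"
  by (simp add: is_path_alt)

lemma path_unique:
  assumes nc: "\<not> (\<exists>c. is_cycle E c)"
  shows "is_path E p \<Longrightarrow> is_path E q \<Longrightarrow> hd p = hd q \<Longrightarrow> last p = last q \<Longrightarrow> p = q"
proof (induction p arbitrary: q)
  case Nil then show ?case by (simp add: is_path_alt)
next
  case (Cons x p')
  obtain q' where q: "q = x # q'" using Cons.prems by (cases q) (auto simp: is_path_alt)
  show ?case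
  proof (cases "p' = []")
    case True
    then have "last q = x" using Cons.prems by simp
    show ?thesis
    proof (rule ccontr)
      assume "x # p' \<noteq> q"
      then have "q' \<noteq> []" using True q by auto
      then have "last q' = x" "last q' \<in> set q'" using \<open>last q = x\<close> q by auto
      then show False using Cons.prems(2) q by (simp add: is_path_alt)
    qed
  next
    case pne: False
    show ?thesis
    proof (cases "q' = []")
      case True
      then have "last (x#p') = x" using Cons.prems q by simp
      then have "last p' = x" "last p' \<in> set p'" using pne by auto
      moreover have "distinct (x # p')" using Cons.prems(1) by (simp add: is_path_alt)
      ultimately show ?thesis by auto
    next
      case qne: False
      have pp: "is_path E p'" "x \<notin> set p'" "{x, hd p'} \<in> E"
        using Cons.prems(1) unfolding is_path_Cons[OF pne] by auto
      have qq: "is_path E q'" "x \<notin> set q'" "{x, hd q'} \<in> E"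
        using Cons.prems(2) unfolding q is_path_Cons[OF qne] by auto
      have lst: "last p' = last q'" using Cons.prems q pne qne by simp
      show ?thesis
      proof (cases "hd p' = hd q'")
        case True
        then show ?thesis using Cons.IH[OF pp(1) qq(1) True lst] q by simp
      next
        case hne: False
        have "\<exists>w\<in>set q'. w \<in> set p'" using lst pne qne by (metis last_in_set)
        then obtain qs w qr where qsplit: "q' = qs @ w # qr" "w \<in> set p'" "\<forall>y\<in>set qs. y \<notin> set p'"
          using split_list_first_prop[of q' "\<lambda>w. w \<in> set p'"] by blast
        obtain ps pr where psplit: "p' = ps @ w # pr" using qsplit(2) by (meson split_list)
        define c where "c = x # ps @ w # rev qs"
        have p1: "is_path E (ps @ [w])" using pp(1) psplit is_path_append[of "ps @ [w]" pr E]
          by (cases "pr = []") auto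
        have q1: "is_path E (qs @ [w])" using qq(1) qsplit is_path_append[of "qs @ [w]" qr E]
          by (cases "qr = []") auto
        have q2: "is_path E (w # rev qs)" using is_path_rev[OF q1] by simp
        have hp: "hd (ps @ [w]) = hd p'" using psplit by (cases ps) auto
        have hq: "hd (qs @ [w]) = hd q'" using qsplit by (cases qs) auto
        have d1: "set (ps @ [w]) \<inter> set (rev qs) = {}" using qsplit psplit by auto
        have "is_path E (ps @ w # rev qs)"
        proof (cases "qs = []")
          case True then show ?thesis using p1 by simp
        next
          case False
          have "is_path E (rev qs)" using q2 False is_path_Cons by (metis Nil_is_rev_conv)
          moreover have "{w, hd (rev qs)} \<in> E" using q2 False is_path_Cons by (metis Nil_is_rev_conv)
          ultimately show ?thesis using is_path_append[of "ps @ [w]" "rev qs" E] p1 d1 False by simp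
        qed
        moreover have "x \<notin> set (ps @ w # rev qs)" using pp(2) qq(2) psplit qsplit by auto
        moreover have "hd (ps @ w # rev qs) = hd p'" using hp by (cases ps) simp_all
        ultimately have cp: "is_path E c" unfolding c_def using is_path_Cons[of "ps @ w # rev qs" E x] pp(3) by simp
        have len: "length c \<ge> 3"
        proof -
          have "ps \<noteq> [] \<or> qs \<noteq> []" using hp hq hne by auto
          then show ?thesis unfolding c_def by (auto simp: Suc_le_eq)
        qed
        have "{last c, hd c} \<in> E"
        proof (cases "qs = []")
          case True then have "w = hd q'" using qsplit by simp
          then show ?thesis using qq(3) True by (simp add: c_def insert_commute)
        next
          case False then have "last c = hd q'" using qsplit by (simp add: c_def last_rev)
          then show ?thesis using qq(3) by (simp add: c_def insert_commute)
        qed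
        then have "is_cycle E c" using cp len by (simp add: is_cycle_def)
        then show ?thesis using nc by blast
      qed
    qed
  qed
qed


lemma is_path_appendD: "is_path E (xs @ ys) \<Longrightarrow> xs \<noteq> [] \<Longrightarrow> is_path E xs"
  "is_path E (xs @ ys) \<Longrightarrow> ys \<noteq> [] \<Longrightarrow> is_path E ys"
  by (cases "xs = []"; cases "ys = []"; simp add: is_path_append)+

lemma pe_last_hd: "xs \<noteq> [] \<Longrightarrow> ys \<noteq> [] \<Longrightarrow> {last xs, hd ys} \<in> path_edges (xs @ ys)"
  unfolding path_edges_def
proof (rule CollectI, rule exI[of _ "length xs - 1"])
  assume "xs \<noteq> []" "ys \<noteq> []"
  then show "{last xs, hd ys} = {(xs @ ys) ! (length xs - 1), (xs @ ys) ! Suc (length xs - 1)} \<and>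
    Suc (length xs - 1) < length (xs @ ys)"
    by (simp add: last_conv_nth hd_conv_nth nth_append)
qed

lemma pe_split: "e \<in> path_edges p \<Longrightarrow> \<exists>ps x y r. p = ps @ x # y # r \<and> e = {x,y}"
proof -
  assume "e \<in> path_edges p"
  then obtain k where k: "e = {p ! k, p ! Suc k}" "Suc k < length p" unfolding path_edges_def by blast
  have "p = take k p @ drop k p" by simp
  also have "drop k p = p ! k # drop (Suc k) p" using k by (simp add: Cons_nth_drop_Suc)
  also have "drop (Suc k) p = p ! Suc k # drop (Suc (Suc k)) p" using k by (simp add: Cons_nth_drop_Suc)
  finally show ?thesis using k by blast
qed

locale ptree =
  fixes n :: nat and V :: "nat set" and E :: "nat set set"
  assumes pt: "phylo_tree n V E"
begin

lemma finV: "finite V" using pt by (simp add: phylo_tree_def is_tree_def)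
lemma edges: "e \<in> E \<Longrightarrow> card e = 2 \<and> e \<subseteq> V" using pt by (simp add: phylo_tree_def is_tree_def)
lemma conn: "u \<in> V \<Longrightarrow> v \<in> V \<Longrightarrow> \<exists>p. is_path E p \<and> hd p = u \<and> last p = v"
  using pt by (simp add: phylo_tree_def is_tree_def)
lemma nc: "\<not> (\<exists>c. is_cycle E c)" using pt by (simp add: phylo_tree_def is_tree_def)
lemma LV: "{1..n} \<subseteq> V" using pt by (simp add: phylo_tree_def)
lemma deg_leaf: "v \<in> {1..n} \<Longrightarrow> deg E v = 1" using pt by (simp add: phylo_tree_def)
lemma deg_int: "v \<in> V - {1..n} \<Longrightarrow> deg E v \<ge> 3" using pt by (simp add: phylo_tree_def)
lemma finE: "finite E"
proof -
  have "E \<subseteq> Pow V" using edges by blast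
  then show ?thesis using finV by (meson finite_Pow_iff rev_finite_subset)
qed

lemma edge_ne: "{a,b} \<in> E \<Longrightarrow> a \<noteq> b" using edges[of "{a,b}"] by auto
lemma edge_V: "{a,b} \<in> E \<Longrightarrow> a \<in> V \<and> b \<in> V" using edges[of "{a,b}"] by auto

abbreviation P where "P u v \<equiv> tpath E u v"

lemma tpath_eq: "is_path E p \<Longrightarrow> P (hd p) (last p) = p"
  unfolding tpath_def by (rule the_equality) (auto intro: path_unique[OF nc])

lemma tpath_eqI: "is_path E p \<Longrightarrow> hd p = u \<Longrightarrow> last p = v \<Longrightarrow> P u v = p"
  using tpath_eq by blast

lemma P_props: "u \<in> V \<Longrightarrow> v \<in> V \<Longrightarrow> is_path E (P u v) \<and> hd (P u v) = u \<and> last (P u v) = v"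
proof -
  assume "u \<in> V" "v \<in> V"
  then obtain p where p: "is_path E p" "hd p = u" "last p = v" using conn by blast
  then have "P u v = p" using tpath_eqI by blast
  then show ?thesis using p by simp
qed

lemma path_set_V: "is_path E p \<Longrightarrow> hd p \<in> V \<Longrightarrow> set p \<subseteq> V"
proof
  fix x assume p: "is_path E p" "hd p \<in> V" and "x \<in> set p"
  then obtain k where k: "k < length p" "x = p ! k" by (auto simp: in_set_conv_nth)
  show "x \<in> V"
  proof (cases k)
    case 0 then show ?thesis using k p by (simp add: hd_conv_nth is_path_def)
  next
    case (Suc m)
    then have "{p ! m, p ! Suc m} \<in> E" using p k unfolding is_path_def by auto
    then show ?thesis using k Suc edge_V by auto
  qed
qed

lemma P_set: "u \<in> V \<Longrightarrow> v \<in> V \<Longrightarrow> set (P u v) \<subseteq> V"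
  by (metis P_props path_set_V)

lemma P_ne: "u \<in> V \<Longrightarrow> v \<in> V \<Longrightarrow> P u v \<noteq> []"
proof -
  assume "u \<in> V" "v \<in> V"
  then have "is_path E (P u v)" using P_props by blast
  then show ?thesis by (simp add: is_path_def)
qed

lemma P_self: "P u u = [u]"
  using tpath_eqI[of "[u]"] by simp

lemma P_edge: "{u,w} \<in> E \<Longrightarrow> P u w = [u,w]"
  using tpath_eqI[of "[u,w]"] edge_ne[of u w] is_path_Cons[of "[w]" E u] by simp

lemma P_rev: "u \<in> V \<Longrightarrow> v \<in> V \<Longrightarrow> P v u = rev (P u v)"
proof -
  assume uv: "u \<in> V" "v \<in> V"
  have "is_path E (rev (P u v))" using P_props[OF uv] is_path_rev by blast
  moreover have "hd (rev (P u v)) = v" "last (rev (P u v)) = u"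
    using P_props[OF uv] P_ne[OF uv] by (simp_all add: hd_rev last_rev)
  ultimately show ?thesis using tpath_eqI by blast
qed

definition S where "S a b = {v \<in> V. P a v = a # P b v}"

lemma side: assumes e: "{a,b} \<in> E" and v: "v \<in> V" shows "v \<in> S a b \<or> v \<in> S b a"
proof (cases "a \<in> set (P b v)")
  case True
  have bV: "b \<in> V" "a \<in> V" using edge_V e by auto
  obtain ps r where sp: "P b v = ps @ a # r" using True by (meson split_list)
  have pth: "is_path E (ps @ a # r)" using P_props[OF bV(1) v] sp by simp
  have "is_path E (ps @ [a])" using is_path_appendD(1)[where xs="ps @ [a]" and ys="r"] pth by simp
  moreover have "hd (ps @ [a]) = b" using P_props[OF bV(1) v] sp by (cases ps) auto
  ultimately have "P b a = ps @ [a]" using tpath_eqI by simp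
  then have "ps = [b]" using P_edge[of b a] e by (simp add: insert_commute)
  have p2: "is_path E (a # r)" using is_path_appendD(2)[where xs="ps" and ys="a # r"] pth by simp
  have "last (a # r) = v" using P_props[OF bV(1) v] sp by simp
  then have "P a v = a # r" using tpath_eqI[OF p2] by simp
  then have "v \<in> S b a" using sp \<open>ps = [b]\<close> v by (simp add: S_def)
  then show ?thesis by simp
next
  case False
  have bV: "b \<in> V" "a \<in> V" using edge_V e by auto
  have "is_path E (a # P b v)"
    using is_path_Cons[of "P b v" E a] P_props[OF bV(1) v] P_ne[OF bV(1) v] False e by simp
  then have "P a v = a # P b v" using tpath_eqI P_props[OF bV(1) v] P_ne[OF bV(1) v] by simp
  then show ?thesis using v by (simp add: S_def)
qed

lemma side_excl: "v \<in> S a b \<Longrightarrow> v \<in> S b a \<Longrightarrow> False"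
proof -
  assume "v \<in> S a b" "v \<in> S b a"
  then have "length (P a v) = Suc (length (P b v))" "length (P b v) = Suc (length (P a v))"
    by (auto simp: S_def)
  then show False by simp
qed

lemma S_V: "v \<in> S a b \<Longrightarrow> v \<in> V" by (simp add: S_def)

lemma S_sub: assumes e: "{a,b} \<in> E" and j: "j \<in> S a b" and vin: "v \<in> set (P b j)"
  shows "v \<in> S a b"
proof -
  have bV: "b \<in> V" "a \<in> V" using edge_V e by auto
  have jV: "j \<in> V" using j S_V by blast
  have vV: "v \<in> V" using P_set[OF bV(1) jV] vin by blast
  obtain ps r where sp: "P b j = ps @ v # r" using vin by (meson split_list)
  have pth: "is_path E (ps @ v # r)" using P_props[OF bV(1) jV] sp by simp
  have "is_path E (ps @ [v])" using is_path_appendD(1)[where xs="ps @ [v]" and ys="r"] pth by simp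
  moreover have "hd (ps @ [v]) = b" using P_props[OF bV(1) jV] sp by (cases ps) auto
  ultimately have pbv: "P b v = ps @ [v]" using tpath_eqI by simp
  have "is_path E (a # ps @ v # r)" using P_props[OF bV(2) jV] j sp by (simp add: S_def)
  then have "is_path E ((a # ps @ [v]) @ r)" by simp
  then have "is_path E (a # ps @ [v])" using is_path_appendD(1) by blast
  then have "P a v = a # ps @ [v]" using tpath_eqI by simp
  then show ?thesis using pbv vV by (simp add: S_def)
qed

lemma opp: assumes e: "{a,b} \<in> E" and i: "i \<in> S b a" and j: "j \<in> S a b"
  shows "P i j = P i a @ P b j"
proof -
  have bV: "b \<in> V" "a \<in> V" using edge_V e by auto
  have iV: "i \<in> V" using i S_V by blast
  have jV: "j \<in> V" using j S_V by blast
  have e': "{b,a} \<in> E" using e by (simp add: insert_commute)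
  have dis: "set (P i a) \<inter> set (P b j) = {}"
  proof (rule ccontr)
    assume "set (P i a) \<inter> set (P b j) \<noteq> {}"
    then obtain v where v1': "v \<in> set (P i a)" and v2: "v \<in> set (P b j)"
      by blast
    have v1: "v \<in> set (P a i)" using v1' P_rev[OF iV bV(2)] by simp
    have "v \<in> S b a" using S_sub[OF e' i v1] .
    moreover have "v \<in> S a b" using S_sub[OF e j v2] .
    ultimately show False using side_excl by blast
  qed
  have pa: "is_path E (P i a)" "P i a \<noteq> []" "last (P i a) = a" "hd (P i a) = i"
    using P_props[OF iV bV(2)] P_ne[OF iV bV(2)] by auto
  have pb: "is_path E (P b j)" "P b j \<noteq> []" "hd (P b j) = b" "last (P b j) = j"
    using P_props[OF bV(1) jV] P_ne[OF bV(1) jV] by auto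
  have "is_path E (P i a @ P b j)" using is_path_append[OF pa(2) pb(2)] pa pb dis e by simp
  then show ?thesis using tpath_eqI[of "P i a @ P b j" i j] pa pb by simp
qed

lemma pe_sides: assumes iV: "i \<in> V" and jV: "j \<in> V" and sp: "P i j = ps @ x # y # r"
  shows "i \<in> S y x \<and> j \<in> S x y"
proof -
  have pth: "is_path E (ps @ x # y # r)" using P_props[OF iV jV] sp by simp
  have hd1: "hd (ps @ x # y # r) = i" "last (ps @ x # y # r) = j" using P_props[OF iV jV] sp by auto
  have xyV: "x \<in> V" "y \<in> V" using P_set[OF iV jV] sp by auto
  have s1: "is_path E (x # y # r)" using is_path_appendD(2)[OF pth] by simp
  then have s2: "is_path E (y # r)" using is_path_appendD(2)[where xs="[x]" and ys="y # r"] by simp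
  have "P x j = x # y # r" using tpath_eqI[OF s1] hd1 by simp
  moreover have "P y j = y # r" using tpath_eqI[OF s2] hd1 by simp
  ultimately have J: "j \<in> S x y" using jV by (simp add: S_def)
  have t1: "is_path E (ps @ [x, y])" using is_path_appendD(1)[where xs="ps @ [x,y]" and ys="r"] pth by simp
  then have t2: "is_path E (ps @ [x])" using is_path_appendD(1)[where xs="ps @ [x]" and ys="[y]"] by simp
  have hps: "hd (ps @ [x, y]) = i" "hd (ps @ [x]) = i" using hd1 by (cases ps; simp)+
  have "P i y = ps @ [x, y]" using tpath_eqI[OF t1] hps by simp
  moreover have "P i x = ps @ [x]" using tpath_eqI[OF t2] hps by simp
  ultimately have "P y i = y # P x i" using P_rev[OF iV xyV(1)] P_rev[OF iV xyV(2)] by simp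
  then show ?thesis using J iV by (simp add: S_def)
qed

lemma pe_iff: assumes e: "{a,b} \<in> E" and i: "i \<in> S b a" and jV: "j \<in> V"
  shows "{a,b} \<in> path_edges (P i j) \<longleftrightarrow> j \<in> S a b"
proof
  assume j: "j \<in> S a b"
  have bV: "b \<in> V" "a \<in> V" using edge_V e by auto
  have iV: "i \<in> V" using i S_V by blast
  have "{last (P i a), hd (P b j)} \<in> path_edges (P i a @ P b j)"
    using pe_last_hd P_ne bV iV jV by blast
  then show "{a,b} \<in> path_edges (P i j)" using opp[OF e i j] P_props bV iV jV by simp
next
  assume "{a,b} \<in> path_edges (P i j)"
  then obtain ps x y r where sp: "P i j = ps @ x # y # r" "{a,b} = {x,y}" using pe_split by blast
  have iV: "i \<in> V" using i S_V by blast
  have ab: "a \<noteq> b" using edge_ne e .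
  have sd: "i \<in> S y x \<and> j \<in> S x y" using pe_sides[OF iV jV sp(1)] .
  show "j \<in> S a b"
  proof (cases "x = a")
    case True then have "y = b" using sp(2) ab by (metis doubleton_eq_iff)
    then show ?thesis using sd True by simp
  next
    case False then have "x = b" "y = a" using sp(2) ab by (metis doubleton_eq_iff)+
    then show ?thesis using sd i side_excl by blast
  qed
qed

lemma near: assumes e: "{a,b} \<in> E" and i: "i \<in> S b a"
  shows "near_end E i {a,b} = a"
  unfolding near_end_def
proof (rule the_equality)
  have bV: "b \<in> V" "a \<in> V" using edge_V e by auto
  have iV: "i \<in> V" using i S_V by blast
  have Pb: "P b i = b # P a i" using i by (simp add: S_def)
  have "distinct (P b i)" using P_props[OF bV(1) iV] by (simp add: is_path_def)
  then have "b \<notin> set (P i a)" using Pb P_rev[OF iV bV(2)] by simp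
  then show "a \<in> {a, b} \<and> (\<forall>c\<in>{a, b}. c \<noteq> a \<longrightarrow> c \<notin> set (P i a))" by auto
  fix c assume c: "c \<in> {a, b} \<and> (\<forall>d\<in>{a, b}. d \<noteq> c \<longrightarrow> d \<notin> set (P i c))"
  show "c = a"
  proof (rule ccontr)
    assume "c \<noteq> a"
    then have "c = b" "a \<notin> set (P i b)" using c by auto
    moreover have "a \<in> set (P i b)"
    proof -
      have "a \<in> set (P a i)" using P_props[OF bV(2) iV] P_ne[OF bV(2) iV] by (metis hd_in_set)
      then show ?thesis using Pb P_rev[OF iV bV(1)] by simp
    qed
    ultimately show False by simp
  qed
qed

end


context ptree begin

definition wt :: "nat \<Rightarrow> real" where "wt v = 1 / (real (deg E v) - 1)"
definition Pi where "Pi x y = (\<Prod>v\<in>{v \<in> set (P x y). v \<in> V - {1..n}}. wt v)"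
definition nbrs where "nbrs w = {x. {w,x} \<in> E}"

lemma nbrs_fin: "finite (nbrs w)"
proof -
  have "nbrs w \<subseteq> V" unfolding nbrs_def using edge_V by blast
  then show ?thesis using finV finite_subset by blast
qed

lemma card_nbrs: "card (nbrs w) = deg E w"
proof -
  have "bij_betw (\<lambda>x. {w,x}) (nbrs w) {e\<in>E. w \<in> e}"
  proof (rule bij_betwI')
    fix x y assume "x \<in> nbrs w" "y \<in> nbrs w"
    then have "x \<noteq> w" "y \<noteq> w" unfolding nbrs_def using edge_ne by blast+
    then show "({w, x} = {w, y}) = (x = y)" by (metis doubleton_eq_iff)
  next
    fix x assume "x \<in> nbrs w" then show "{w, x} \<in> {e \<in> E. w \<in> e}" unfolding nbrs_def by simp
  next
    fix e assume e: "e \<in> {e \<in> E. w \<in> e}"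
    then obtain a b where ab: "e = {a,b}" "a \<noteq> b" using edges card_2_iff by (metis (no_types, lifting) mem_Collect_eq)
    show "\<exists>x\<in>nbrs w. e = {w, x}"
    proof (cases "w = a")
      case True then show ?thesis using ab e unfolding nbrs_def by auto
    next
      case False then have "w = b" using ab e by auto
      then show ?thesis using ab e unfolding nbrs_def by (auto simp: insert_commute)
    qed
  qed
  then show ?thesis unfolding deg_def by (rule bij_betw_same_card)
qed

lemma leaf_nbr: assumes "w \<in> {1..n}" "{w,u} \<in> E" "{w,x} \<in> E" shows "x = u"
proof -
  have "card (nbrs w) = 1" using card_nbrs deg_leaf assms(1) by simp
  moreover have "u \<in> nbrs w" "x \<in> nbrs w" using assms unfolding nbrs_def by auto
  ultimately show ?thesis by (metis card_1_singletonE singletonD)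
qed

lemma second: assumes wV: "w \<in> V" and jV: "j \<in> V" and ne: "j \<noteq> w"
  shows "\<exists>x r. P w j = w # x # r \<and> {w,x} \<in> E \<and> P x j = x # r"
proof -
  have pp: "is_path E (P w j)" "hd (P w j) = w" "last (P w j) = j" "P w j \<noteq> []"
    using P_props[OF wV jV] P_ne[OF wV jV] by auto
  then obtain t where t: "P w j = w # t" by (cases "P w j") auto
  then have "t \<noteq> []" using pp ne by auto
  then obtain x r where xr: "t = x # r" by (cases t) auto
  have "is_path E (x # r)" "{w, x} \<in> E" using pp(1) t xr is_path_Cons[of "x # r" E w] by auto
  moreover have "last (x # r) = j" using pp t xr by simp
  ultimately have "P x j = x # r" using tpath_eqI[of "x # r" x j] by simp
  then show ?thesis using t xr \<open>{w,x} \<in> E\<close> by blast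
qed

lemma F_aux: "\<forall>u w. {u,w} \<in> E \<longrightarrow> card (S u w) = N \<longrightarrow> (\<Sum>j\<in>{1..n} \<inter> S u w. Pi w j) = 1"
proof (induction N rule: less_induct)
  case (less N)
  show ?case
  proof (intro allI impI)
    fix u w assume e: "{u,w} \<in> E" and cN: "card (S u w) = N"
    have uV: "u \<in> V" and wV: "w \<in> V" using edge_V e by auto
    have uw: "u \<noteq> w" using edge_ne e .
    have e': "{w,u} \<in> E" using e by (simp add: insert_commute)
    have w_in: "w \<in> S u w" using P_edge[OF e] P_self wV by (simp add: S_def)
    have finS: "finite (S u w)" using finV unfolding S_def by simp
    show "(\<Sum>j\<in>{1..n} \<inter> S u w. Pi w j) = 1"
    proof (cases "w \<in> {1..n}")
      case True
      have "{1..n} \<inter> S u w = {w}"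
      proof (rule ccontr)
        assume "{1..n} \<inter> S u w \<noteq> {w}"
        then obtain j where j: "j \<in> {1..n}" "j \<in> S u w" "j \<noteq> w" using True w_in by blast
        have jV: "j \<in> V" using j S_V by blast
        obtain x r where xr: "P w j = w # x # r" "{w,x} \<in> E" using second[OF wV jV j(3)] by blast
        have "distinct (P u j)" using P_props[OF uV jV] by (simp add: is_path_def)
        then have "x \<noteq> u" using j(2) xr by (auto simp: S_def)
        moreover have "x = u" using leaf_nbr[OF True e' xr(2)] .
        ultimately show False by simp
      qed
      moreover have "Pi w w = 1"
      proof -
        have "{v \<in> set (P w w). v \<in> V - {1..n}} = {}" using True P_self by auto
        then show ?thesis unfolding Pi_def by (simp only: prod.empty)
      qed
      ultimately show ?thesis by simp
    next
      case False
      have wI: "w \<in> V - {1..n}" using False wV by simp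
      have dg: "deg E w \<ge> 3" using deg_int wI by blast
      define X where "X = nbrs w - {u}"
      have X_e: "x \<in> X \<Longrightarrow> {w,x} \<in> E" for x unfolding X_def nbrs_def by simp
      have X_V: "x \<in> X \<Longrightarrow> x \<in> V" for x using X_e edge_V by blast
      have claim_a: "S w x \<subseteq> S u w" if x: "x \<in> X" for x
      proof
        fix v assume v: "v \<in> S w x"
        have vV: "v \<in> V" using v S_V by blast
        have Pw: "P w v = w # P x v" using v by (simp add: S_def)
        have "u \<notin> set (P w v)"
        proof
          assume "u \<in> set (P w v)"
          then have "u \<in> set (P x v)" using Pw uw by simp
          then have "u \<in> S w x" using S_sub[OF X_e[OF x] v] by blast
          then have "P w u = w # P x u" by (simp add: S_def)
          then have "P x u = [u]" using P_edge[OF e'] by simp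
          then have "x = u" using P_props[OF X_V[OF x] uV] by simp
          then show False using x X_def by simp
        qed
        moreover have "is_path E (P w v)" "hd (P w v) = w" "last (P w v) = v" "P w v \<noteq> []"
          using P_props[OF wV vV] P_ne[OF wV vV] by auto
        ultimately have "is_path E (u # P w v)" using is_path_Cons[of "P w v" E u] e by simp
        then have "P u v = u # P w v" using tpath_eqI[of "u # P w v" u v] \<open>last (P w v) = v\<close> \<open>P w v \<noteq> []\<close> by simp
        then show "v \<in> S u w" using vV by (simp add: S_def)
      qed
      have Ueq: "{1..n} \<inter> S u w = (\<Union>x\<in>X. {1..n} \<inter> S w x)"
      proof
        show "(\<Union>x\<in>X. {1..n} \<inter> S w x) \<subseteq> {1..n} \<inter> S u w" using claim_a by blast
      next
        show "{1..n} \<inter> S u w \<subseteq> (\<Union>x\<in>X. {1..n} \<inter> S w x)"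
        proof
          fix j assume j: "j \<in> {1..n} \<inter> S u w"
          have jV: "j \<in> V" using j S_V by blast
          have jw: "j \<noteq> w" using j False by blast
          obtain x r where xr: "P w j = w # x # r" "{w,x} \<in> E" "P x j = x # r"
            using second[OF wV jV jw] by blast
          have "distinct (P u j)" using P_props[OF uV jV] by (simp add: is_path_def)
          then have "x \<noteq> u" using j xr by (auto simp: S_def)
          then have "x \<in> X" using xr unfolding X_def nbrs_def by simp
          moreover have "j \<in> S w x" using xr jV by (simp add: S_def)
          ultimately show "j \<in> (\<Union>x\<in>X. {1..n} \<inter> S w x)" using j by blast
        qed
      qed
      have disj: "\<forall>x\<in>X. \<forall>y\<in>X. x \<noteq> y \<longrightarrow> ({1..n} \<inter> S w x) \<inter> ({1..n} \<inter> S w y) = {}"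
      proof (intro ballI impI)
        fix x y assume x: "x \<in> X" and y: "y \<in> X" and xy: "x \<noteq> y"
        show "({1..n} \<inter> S w x) \<inter> ({1..n} \<inter> S w y) = {}"
        proof (rule ccontr)
          assume "({1..n} \<inter> S w x) \<inter> ({1..n} \<inter> S w y) \<noteq> {}"
          then obtain j where "j \<in> S w x" "j \<in> S w y" by blast
          then have jV: "j \<in> V" and "P x j = P y j" by (auto simp: S_def)
          then have "x = y" using P_props[OF X_V[OF x] jV] P_props[OF X_V[OF y] jV] by metis
          then show False using xy by simp
        qed
      qed
      have finX: "finite X" using nbrs_fin unfolding X_def by simp
      have Pi_step: "Pi w j = wt w * Pi x j" if x: "x \<in> X" and j: "j \<in> S w x" for x j
      proof -
        have jV: "j \<in> V" using j S_V by blast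
        have Pw: "P w j = w # P x j" using j by (simp add: S_def)
        have "distinct (P w j)" using P_props[OF wV jV] by (simp add: is_path_def)
        then have wn: "w \<notin> set (P x j)" using Pw by simp
        have "{v \<in> set (P w j). v \<in> V - {1..n}} = insert w {v \<in> set (P x j). v \<in> V - {1..n}}"
          using Pw wI by auto
        then show ?thesis unfolding Pi_def using wn by simp
      qed
      have IH: "(\<Sum>j\<in>{1..n} \<inter> S w x. Pi x j) = 1" if x: "x \<in> X" for x
      proof -
        have "S w x \<subset> S u w"
        proof -
          have "w \<notin> S w x" using P_self P_ne[OF X_V[OF x] wV] by (auto simp: S_def)
          then show ?thesis using claim_a[OF x] w_in by blast
        qed
        then have "card (S w x) < N" using cN finS psubset_card_mono by blast
        then show ?thesis using less.IH X_e[OF x] by blast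
      qed
      have "(\<Sum>j\<in>{1..n} \<inter> S u w. Pi w j) = (\<Sum>x\<in>X. \<Sum>j\<in>{1..n} \<inter> S w x. Pi w j)"
        unfolding Ueq by (rule sum.UNION_disjoint[OF finX _ disj]) simp
      also have "\<dots> = (\<Sum>x\<in>X. wt w * (\<Sum>j\<in>{1..n} \<inter> S w x. Pi x j))"
        using Pi_step by (simp add: sum_distrib_left)
      also have "\<dots> = (\<Sum>x\<in>X. wt w)" using IH by simp
      also have "\<dots> = real (card X) * wt w" by simp
      also have "card X = deg E w - 1"
      proof -
        have "u \<in> nbrs w" using e' unfolding nbrs_def by simp
        then show ?thesis unfolding X_def using card_nbrs nbrs_fin by simp
      qed
      also have "real (deg E w - 1) * wt w = 1" using dg unfolding wt_def by (simp add: of_nat_diff)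
      finally show ?thesis .
    qed
  qed
qed

lemma F: "{u,w} \<in> E \<Longrightarrow> (\<Sum>j\<in>{1..n} \<inter> S u w. Pi w j) = 1"
  using F_aux by blast

lemma pe_sub: "i \<in> V \<Longrightarrow> j \<in> V \<Longrightarrow> path_edges (P i j) \<subseteq> E"
  using P_props[of i j] unfolding path_edges_def is_path_def by blast

lemma prod_split: assumes e: "{a,b} \<in> E" and i: "i \<in> S b a" and j: "j \<in> S a b"
  shows "lambda n V E i j = (\<Prod>v\<in>{v \<in> set (P i a). v \<in> V - {1..n}}. wt v) * Pi b j"
proof -
  have bV: "b \<in> V" "a \<in> V" using edge_V e by auto
  have iV: "i \<in> V" using i S_V by blast
  have jV: "j \<in> V" using j S_V by blast
  have o: "P i j = P i a @ P b j" using opp[OF e i j] .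
  have "distinct (P i j)" using P_props[OF iV jV] by (simp add: is_path_def)
  then have dis: "set (P i a) \<inter> set (P b j) = {}" using o by simp
  have "{v \<in> set (P i j). v \<in> V - {1..n}} =
        {v \<in> set (P i a). v \<in> V - {1..n}} \<union> {v \<in> set (P b j). v \<in> V - {1..n}}" using o by auto
  moreover have "{v \<in> set (P i a). v \<in> V - {1..n}} \<inter> {v \<in> set (P b j). v \<in> V - {1..n}} = {}"
    using dis by auto
  ultimately show ?thesis unfolding lambda_def I_leaves_def Pi_def wt_def
    by (simp add: prod.union_disjoint)
qed

lemma part1_oriented: assumes e: "{a,b} \<in> E" and iL: "i \<in> {1..n}" and i: "i \<in> S b a"
  shows "(\<Sum>j\<in>{1..n}-{i}. if {a,b} \<in> path_edges (P i j) then lambda n V E i j else 0)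
         = 2 * mu n V E i {a,b}"
proof -
  define Q where "Q = (\<Prod>v\<in>{v \<in> set (P i a). v \<in> V - {1..n}}. wt v)"
  have mu: "mu n V E i {a,b} = 1/2 * Q"
    unfolding mu_def I_edge_def near[OF e i] Q_def wt_def by simp
  have "(\<Sum>j\<in>{1..n}-{i}. if {a,b} \<in> path_edges (P i j) then lambda n V E i j else 0)
      = (\<Sum>j\<in>{1..n}-{i}. if j \<in> S a b then lambda n V E i j else 0)"
  proof (rule sum.cong[OF refl])
    fix j assume "j \<in> {1..n}-{i}"
    then have "j \<in> V" using LV by blast
    then show "(if {a,b} \<in> path_edges (P i j) then lambda n V E i j else 0)
             = (if j \<in> S a b then lambda n V E i j else 0)" using pe_iff[OF e i] by simp
  qed
  also have "\<dots> = (\<Sum>j\<in>({1..n}-{i}) \<inter> S a b. lambda n V E i j)"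
    by (rule sum.inter_restrict[symmetric]) simp
  also have "({1..n}-{i}) \<inter> S a b = {1..n} \<inter> S a b" using i side_excl by blast
  also have "(\<Sum>j\<in>{1..n} \<inter> S a b. lambda n V E i j) = (\<Sum>j\<in>{1..n} \<inter> S a b. Q * Pi b j)"
    using prod_split[OF e i] Q_def by simp
  also have "\<dots> = Q" using F[OF e] by (simp add: sum_distrib_left[symmetric])
  finally show ?thesis using mu by simp
qed

lemma edge_cases: assumes "e \<in> E" obtains a b where "e = {a,b}" "{a,b} \<in> E"
  using edges[OF assms] card_2_iff assms by metis

lemma part1_edge: assumes e: "e \<in> E" and iL: "i \<in> {1..n}"
  shows "(\<Sum>j\<in>{1..n}-{i}. if e \<in> path_edges (P i j) then lambda n V E i j else 0)
         = 2 * mu n V E i e"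
proof -
  obtain a b where ab: "e = {a,b}" "{a,b} \<in> E" using edge_cases[OF e] by blast
  have iV: "i \<in> V" using iL LV by blast
  show ?thesis
  proof (cases "i \<in> S b a")
    case True then show ?thesis using part1_oriented[OF ab(2) iL] ab by simp
  next
    case False
    then have "i \<in> S a b" using side[OF ab(2) iV] by blast
    moreover have "{b,a} \<in> E" using ab by (simp add: insert_commute)
    ultimately show ?thesis using part1_oriented[of b a i] iL ab by (simp add: insert_commute)
  qed
qed

lemma part2_oriented: assumes e: "{a,b} \<in> E"
  shows "(\<Sum>i\<in>{1..n} \<inter> S b a. mu n V E i {a,b}) = 1/2"
proof -
  have bV: "b \<in> V" "a \<in> V" using edge_V e by auto
  have e': "{b,a} \<in> E" using e by (simp add: insert_commute)
  have "(\<Sum>i\<in>{1..n} \<inter> S b a. mu n V E i {a,b}) = (\<Sum>i\<in>{1..n} \<inter> S b a. 1/2 * Pi a i)"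
  proof (rule sum.cong[OF refl])
    fix i assume i: "i \<in> {1..n} \<inter> S b a"
    then have iV: "i \<in> V" using S_V by blast
    have "set (P i a) = set (P a i)" using P_rev[OF iV bV(2)] by simp
    moreover have "near_end E i {a,b} = a" using near[OF e] i by blast
    ultimately show "mu n V E i {a,b} = 1/2 * Pi a i"
      unfolding mu_def I_edge_def Pi_def wt_def by simp
  qed
  also have "\<dots> = 1/2 * (\<Sum>i\<in>{1..n} \<inter> S b a. Pi a i)" by (rule sum_distrib_left[symmetric])
  also have "\<dots> = 1/2" using F[OF e'] by simp
  finally show ?thesis .
qed

lemma part2_edge: assumes e: "e \<in> E" shows "(\<Sum>i\<in>{1..n}. mu n V E i e) = 1"
proof -
  obtain a b where ab: "e = {a,b}" "{a,b} \<in> E" using edge_cases[OF e] by blast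
  have e': "{b,a} \<in> E" using ab by (simp add: insert_commute)
  have "{1..n} = ({1..n} \<inter> S b a) \<union> ({1..n} \<inter> S a b)" using side[OF ab(2)] LV by blast
  moreover have "({1..n} \<inter> S b a) \<inter> ({1..n} \<inter> S a b) = {}" using side_excl by blast
  ultimately have "(\<Sum>i\<in>{1..n}. mu n V E i e) =
     (\<Sum>i\<in>{1..n} \<inter> S b a. mu n V E i e) + (\<Sum>i\<in>{1..n} \<inter> S a b. mu n V E i e)"
    by (metis finite_Int finite_atLeastAtMost sum.union_disjoint)
  also have "\<dots> = 1/2 + 1/2" using part2_oriented[OF ab(2)] part2_oriented[OF e'] ab
    by (simp add: insert_commute)
  finally show ?thesis by simp
qed

lemma main1: assumes iL: "i \<in> {1..n}"
  shows "phi_Pa n V E l i = 1/2 * (\<Sum>j\<in>{1..n} - {i}. lambda n V E i j * tdist E l i j)"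
proof -
  have iV: "i \<in> V" using iL LV by blast
  have "(\<Sum>j\<in>{1..n} - {i}. lambda n V E i j * tdist E l i j)
     = (\<Sum>j\<in>{1..n} - {i}. \<Sum>e\<in>E. (if e \<in> path_edges (P i j) then lambda n V E i j else 0) * l e)"
  proof (rule sum.cong[OF refl])
    fix j assume "j \<in> {1..n} - {i}"
    then have jV: "j \<in> V" using LV by blast
    have "tdist E l i j = (\<Sum>e\<in>E \<inter> path_edges (P i j). l e)"
      unfolding tdist_def using pe_sub[OF iV jV] by (simp add: Int_absorb1)
    also have "\<dots> = (\<Sum>e\<in>E. if e \<in> path_edges (P i j) then l e else 0)"
      by (rule sum.inter_restrict[OF finE])
    finally show "lambda n V E i j * tdist E l i j
        = (\<Sum>e\<in>E. (if e \<in> path_edges (P i j) then lambda n V E i j else 0) * l e)"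
      by (auto simp: sum_distrib_left intro!: sum.cong)
  qed
  also have "\<dots> = (\<Sum>e\<in>E. \<Sum>j\<in>{1..n} - {i}. (if e \<in> path_edges (P i j) then lambda n V E i j else 0) * l e)"
    by (rule sum.swap)
  also have "\<dots> = (\<Sum>e\<in>E. (\<Sum>j\<in>{1..n} - {i}. (if e \<in> path_edges (P i j) then lambda n V E i j else 0)) * l e)"
    by (simp add: sum_distrib_right)
  also have "\<dots> = (\<Sum>e\<in>E. 2 * mu n V E i e * l e)"
    using part1_edge[OF _ iL] by simp
  finally show ?thesis unfolding phi_Pa_def by (simp add: sum_distrib_left)
qed

lemma main2: "(\<Sum>i\<in>{1..n}. phi_Pa n V E l i) = (\<Sum>e\<in>E. l e)"
proof -
  have "(\<Sum>i\<in>{1..n}. phi_Pa n V E l i) = (\<Sum>e\<in>E. \<Sum>i\<in>{1..n}. mu n V E i e * l e)"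
    unfolding phi_Pa_def by (rule sum.swap)
  also have "\<dots> = (\<Sum>e\<in>E. (\<Sum>i\<in>{1..n}. mu n V E i e) * l e)" by (simp add: sum_distrib_right)
  also have "\<dots> = (\<Sum>e\<in>E. l e)" using part2_edge by simp
  finally show ?thesis .
qed

end

theorem theorem9:
  fixes n :: nat and V :: "nat set" and E :: "nat set set" and l :: "nat set \<Rightarrow> real"
  assumes "n \<ge> 2"
    and "phylo_tree n V E"
    and "\<forall>e\<in>E. l e \<ge> 0"
  shows "(\<forall>i\<in>{1..n}. phi_Pa n V E l i
            = 1/2 * (\<Sum>j\<in>{1..n} - {i}. lambda n V E i j * tdist E l i j))
         \<and> (\<Sum>i\<in>{1..n}. phi_Pa n V E l i) = (\<Sum>e\<in>E. l e)"
proof -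
  interpret ptree n V E using assms(2) by unfold_locales
  show ?thesis using main1 main2 by blast
qed

end
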